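(* For every integer $n\ge0$, $$E_6^b(n)=(2n+1)A_5^b(n)=\tfrac15(1+2n)^2(5+27n+71n^2+88n^3+44n^4),$$ $E_6^s(0)=1$, $E_6^s(n)=\tfrac25 n(47+480n^2+528n^4)$ for $n\ge1$, and $$\sum_{n\ge0}E_6^b(n)x^n=\frac{1+416x+5815x^2+12880x^3+5815x^4+416x^5+x^6}{(1-x)^7}.$$
   Context: Let $G$ be the $8\times 6$ matrix whose columns are $c_1=(0,-1,1,0,0,0,0,0)^T$, $c_2=(0,0,-1,1,0,0,0,0)^T$, $c_3=(0,0,0,-1,1,0,0,0)^T$, $c_4=(0,0,0,0,-1,1,0,0)^T$, $c_5=(0,0,0,0,0,-1,1,0)^T$, $c_6=\tfrac12(1,1,1,1,-1,-1,-1,-1)^T$, and let $E_6=G\mathbb{Z}^6\subset\mathbb{R}^8$. For an integer $n\ge0$, $E_6^b(n)$ is the number of points $p\in E_6\cap\mathbb{Z}^8$ with $|p_i|\le n$ for all $i=1,\dots,8$; $E_6^s(0)=1$ and $E_6^s(n)=E_6^b(n)-E_6^b(n-1)$ for $n\ge1$. Here $A_5^b(n)$ denotes the number of $q\in\mathbb{Z}^6$ with $|q_i|\le n$ for all $i$ and $q_1+\dots+q_6=0$. The generating function is a formal power series in $x$. *)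

theory Defs
  imports Complex_Main "HOL-Computational_Algebra.Formal_Power_Series"
begin

text \<open>Entries of the 8x6 matrix G, rows i = 0..7, columns j = 0..5 (0-indexed).
  Columns j = 0..4 are c_{j+1}: -1 in row j+1, +1 in row j+2.
  Column 5 is c_6 = 1/2 (1,1,1,1,-1,-1,-1,-1).\<close>
definition G :: "nat \<Rightarrow> nat \<Rightarrow> real" where
  "G i j = (if j < 5 then (if i = j + 1 then -1 else if i = j + 2 then 1 else 0)
            else if j = 5 then (if i < 4 then 1/2 else if i < 8 then -1/2 else 0)
            else 0)"

definition in_E6 :: "(nat \<Rightarrow> int) \<Rightarrow> bool" where
  "in_E6 p \<longleftrightarrow> (\<exists>z :: nat \<Rightarrow> int. \<forall>i<8. real_of_int (p i) = (\<Sum>j<6. G i j * real_of_int (z j)))"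

definition E6b :: "nat \<Rightarrow> nat" where
  "E6b n = card {p :: nat \<Rightarrow> int. (\<forall>i\<ge>8. p i = 0) \<and> (\<forall>i<8. \<bar>p i\<bar> \<le> int n) \<and> in_E6 p}"

definition E6s :: "nat \<Rightarrow> int" where
  "E6s n = (if n = 0 then 1 else int (E6b n) - int (E6b (n - 1)))"

definition A5b :: "nat \<Rightarrow> nat" where
  "A5b n = card {q :: nat \<Rightarrow> int. (\<forall>i\<ge>6. q i = 0) \<and> (\<forall>i<6. \<bar>q i\<bar> \<le> int n) \<and> (\<Sum>i<6. q i) = 0}"

end

theory Submission
  imports Defs
begin


lemma inE6_iff:
  "in_E6 p \<longleftrightarrow> p 7 = - p 0 \<and> p 1 + p 2 + p 3 + p 4 + p 5 + p 6 = 0"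
proof
  assume "in_E6 p"
  then obtain z :: "nat \<Rightarrow> int" where h: "\<forall>i<8. real_of_int (p i) = (\<Sum>j<6. G i j * real_of_int (z j))"
    unfolding in_E6_def by blast
  have e: "\<And>i. i < 8 \<Longrightarrow> real_of_int (p i) = (\<Sum>j<6. G i j * real_of_int (z j))" using h by blast
  have e0: "real_of_int (p 0) = real_of_int (z 5) / 2" using e[of 0] by (simp add: G_def eval_nat_numeral lessThan_Suc)
  have e7: "real_of_int (p 7) = - real_of_int (z 5) / 2" using e[of 7] by (simp add: G_def eval_nat_numeral lessThan_Suc)
  have e1: "real_of_int (p 1) = - real_of_int (z 0) + real_of_int (z 5) / 2" using e[of 1] by (simp add: G_def eval_nat_numeral lessThan_Suc)
  have e2: "real_of_int (p 2) = real_of_int (z 0) - real_of_int (z 1) + real_of_int (z 5) / 2" using e[of 2] by (simp add: G_def eval_nat_numeral lessThan_Suc)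
  have e3: "real_of_int (p 3) = real_of_int (z 1) - real_of_int (z 2) + real_of_int (z 5) / 2" using e[of 3] by (simp add: G_def eval_nat_numeral lessThan_Suc)
  have e4: "real_of_int (p 4) = real_of_int (z 2) - real_of_int (z 3) - real_of_int (z 5) / 2" using e[of 4] by (simp add: G_def eval_nat_numeral lessThan_Suc)
  have e5: "real_of_int (p 5) = real_of_int (z 3) - real_of_int (z 4) - real_of_int (z 5) / 2" using e[of 5] by (simp add: G_def eval_nat_numeral lessThan_Suc)
  have e6: "real_of_int (p 6) = real_of_int (z 4) - real_of_int (z 5) / 2" using e[of 6] by (simp add: G_def eval_nat_numeral lessThan_Suc)
  have "real_of_int (p 7) = - real_of_int (p 0)" using e0 e7 by simp
  moreover have "real_of_int (p 1 + p 2 + p 3 + p 4 + p 5 + p 6) = 0" using e1 e2 e3 e4 e5 e6 by simp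
  ultimately show "p 7 = - p 0 \<and> p 1 + p 2 + p 3 + p 4 + p 5 + p 6 = 0" by linarith
next
  assume a: "p 7 = - p 0 \<and> p 1 + p 2 + p 3 + p 4 + p 5 + p 6 = 0"
  define t where "t = p 0"
  define z0 where "z0 = t - p 1"
  define z1 where "z1 = t + z0 - p 2"
  define z2 where "z2 = t + z1 - p 3"
  define z3 where "z3 = z2 - t - p 4"
  define z4 where "z4 = z3 - t - p 5"
  define z :: "nat \<Rightarrow> int" where "z = (\<lambda>j. if j = 0 then z0 else if j = 1 then z1 else if j = 2 then z2
      else if j = 3 then z3 else if j = 4 then z4 else 2 * t)"
  have "\<forall>i<8. real_of_int (p i) = (\<Sum>j<6. G i j * real_of_int (z j))"
  proof (intro allI impI)
    fix i :: nat assume "i < 8"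
    hence "i = 0 \<or> i = 1 \<or> i = 2 \<or> i = 3 \<or> i = 4 \<or> i = 5 \<or> i = 6 \<or> i = 7" by linarith
    then show "real_of_int (p i) = (\<Sum>j<6. G i j * real_of_int (z j))"
      using a by (auto simp: G_def eval_nat_numeral lessThan_Suc z_def z0_def z1_def z2_def z3_def z4_def t_def)
  qed
  then show "in_E6 p" unfolding in_E6_def by blast
qed



definition A5set :: "nat \<Rightarrow> (nat \<Rightarrow> int) set" where
  "A5set n = {q :: nat \<Rightarrow> int. (\<forall>i\<ge>6. q i = 0) \<and> (\<forall>i<6. \<bar>q i\<bar> \<le> int n) \<and> (\<Sum>i<6. q i) = 0}"

lemma finite_box: "finite {q :: nat \<Rightarrow> int. (\<forall>i\<ge>k. q i = 0) \<and> (\<forall>i<k. \<bar>q i\<bar> \<le> int n)}"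
proof -
  have "{q :: nat \<Rightarrow> int. (\<forall>i\<ge>k. q i = 0) \<and> (\<forall>i<k. \<bar>q i\<bar> \<le> int n)}
     \<subseteq> {f. \<forall>x. (x \<in> {..<k} \<longrightarrow> f x \<in> {-int n..int n}) \<and> (x \<notin> {..<k} \<longrightarrow> f x = 0)}"
    by auto
  moreover have "finite {f. \<forall>x. (x \<in> {..<k} \<longrightarrow> f x \<in> {-int n..int n}) \<and> (x \<notin> {..<k} \<longrightarrow> f x = (0::int))}"
    by (rule finite_set_of_finite_funs) auto
  ultimately show ?thesis by (rule finite_subset)
qed

lemma finite_A5set: "finite (A5set n)"
  by (rule finite_subset[OF _ finite_box[of 6 n]]) (auto simp: A5set_def)

lemma E6b_eq: "E6b n = (2 * n + 1) * card (A5set n)"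
proof -
  let ?S = "{p :: nat \<Rightarrow> int. (\<forall>i\<ge>8. p i = 0) \<and> (\<forall>i<8. \<bar>p i\<bar> \<le> int n) \<and> in_E6 p}"
  define \<phi> :: "int \<times> (nat \<Rightarrow> int) \<Rightarrow> nat \<Rightarrow> int" where
    "\<phi> = (\<lambda>(t,q) i. if i = 0 then t else if i = 7 then -t else if 1 \<le> i \<and> i \<le> 6 then q (i - 1) else 0)"
  have inj: "inj_on \<phi> ({-int n..int n} \<times> A5set n)"
  proof (rule inj_onI, clarify)
    fix t q t' q'
    assume q: "q \<in> A5set n" and q': "q' \<in> A5set n" and eq: "\<phi> (t, q) = \<phi> (t', q')"
    have "t = t'" using fun_cong[OF eq, of 0] by (simp add: \<phi>_def)
    moreover have "q = q'"
    proof
      fix i show "q i = q' i"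
      proof (cases "i < 6")
        case True then show ?thesis using fun_cong[OF eq, of "Suc i"] by (simp add: \<phi>_def)
      next
        case False then show ?thesis using q q' by (simp add: A5set_def)
      qed
    qed
    ultimately show "t = t' \<and> q = q'" by simp
  qed
  have img: "\<phi> ` ({-int n..int n} \<times> A5set n) = ?S"
  proof
    show "\<phi> ` ({-int n..int n} \<times> A5set n) \<subseteq> ?S"
    proof (rule image_subsetI)
      fix x assume "x \<in> {-int n..int n} \<times> A5set n"
      then obtain t q where x: "x = (t, q)" and t: "t \<in> {-int n..int n}" and q: "q \<in> A5set n" by blast
      have qs: "q 0 + q 1 + q 2 + q 3 + q 4 + q 5 = 0" using q by (simp add: A5set_def eval_nat_numeral)
      have qb: "\<And>i. i < 6 \<Longrightarrow> \<bar>q i\<bar> \<le> int n" using q by (simp add: A5set_def)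
      have "\<forall>i\<ge>8. \<phi> (t, q) i = 0" by (simp add: \<phi>_def)
      moreover have "\<forall>i<8. \<bar>\<phi> (t, q) i\<bar> \<le> int n"
      proof (intro allI impI)
        fix i :: nat assume "i < 8"
        then show "\<bar>\<phi> (t, q) i\<bar> \<le> int n" using t qb[of "i - 1"] by (auto simp: \<phi>_def)
      qed
      moreover have "in_E6 (\<phi> (t, q))" unfolding inE6_iff using qs by (simp add: \<phi>_def)
      ultimately show "\<phi> x \<in> ?S" using x by blast
    qed
  next
    show "?S \<subseteq> \<phi> ` ({-int n..int n} \<times> A5set n)"
    proof
      fix p assume p: "p \<in> ?S"
      hence p8: "\<forall>i\<ge>8. p i = 0" and pb: "\<forall>i<8. \<bar>p i\<bar> \<le> int n" and pe: "p 7 = - p 0 \<and> p 1 + p 2 + p 3 + p 4 + p 5 + p 6 = 0"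
        using inE6_iff by auto
      define q where "q = (\<lambda>i. if i < 6 then p (Suc i) else 0)"
      have "q \<in> A5set n" using pb pe by (auto simp: A5set_def q_def eval_nat_numeral)
      moreover have "p 0 \<in> {-int n..int n}" using pb by fastforce
      moreover have "p = \<phi> (p 0, q)"
      proof
        fix i show "p i = \<phi> (p 0, q) i"
        proof (cases "i = 0 \<or> i = 7 \<or> i \<ge> 8")
          case True then show ?thesis using p8 pe by (auto simp: \<phi>_def q_def)
        next
          case False then show ?thesis by (auto simp: \<phi>_def q_def)
        qed
      qed
      ultimately show "p \<in> \<phi> ` ({-int n..int n} \<times> A5set n)" by blast
    qed
  qed
  have "E6b n = card ?S" by (simp add: E6b_def)
  also have "\<dots> = card ({-int n..int n} \<times> A5set n)" using card_image[OF inj] img by simp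
  also have "\<dots> = (2 * n + 1) * card (A5set n)" by (simp add: card_cartesian_product nat_add_distrib nat_mult_distrib)
  finally show ?thesis .
qed



definition Cset :: "nat \<Rightarrow> nat \<Rightarrow> int \<Rightarrow> (nat \<Rightarrow> int) set" where
  "Cset n k s = {q. (\<forall>i\<ge>k. q i = 0) \<and> (\<forall>i<k. \<bar>q i\<bar> \<le> int n) \<and> (\<Sum>i<k. q i) = s}"

lemma finite_Cset: "finite (Cset n k s)"
  by (rule finite_subset[OF _ finite_box[of k n]]) (auto simp: Cset_def)

lemma Cset_0: "card (Cset n 0 s) = (if s = 0 then 1 else 0)"
proof -
  have "Cset n 0 s = (if s = 0 then {\<lambda>_. 0} else {})" by (auto simp: Cset_def)
  then show ?thesis by simp
qed

lemma Cset_Suc: "card (Cset n (Suc k) s) = (\<Sum>a\<in>{-int n..int n}. card (Cset n k (s - a)))"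
proof -
  define \<psi> :: "int \<times> (nat \<Rightarrow> int) \<Rightarrow> nat \<Rightarrow> int" where "\<psi> = (\<lambda>(a, q). q(k := a))"
  let ?D = "Sigma {-int n..int n} (\<lambda>a. Cset n k (s - a))"
  have inj: "inj_on \<psi> ?D"
  proof (rule inj_onI, clarify)
    fix a q a' q'
    assume q: "q \<in> Cset n k (s - a)" and q': "q' \<in> Cset n k (s - a')" and eq: "\<psi> (a, q) = \<psi> (a', q')"
    have "a = a'" using fun_cong[OF eq, of k] by (simp add: \<psi>_def)
    moreover have "q = q'"
    proof
      fix i show "q i = q' i"
      proof (cases "i = k")
        case True then show ?thesis using q q' by (simp add: Cset_def)
      next
        case False then show ?thesis using fun_cong[OF eq, of i] by (simp add: \<psi>_def)
      qed
    qed
    ultimately show "a = a' \<and> q = q'" by simp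
  qed
  have img: "\<psi> ` ?D = Cset n (Suc k) s"
  proof
    show "\<psi> ` ?D \<subseteq> Cset n (Suc k) s"
    proof (rule image_subsetI)
      fix x assume "x \<in> ?D"
      then obtain a q where x: "x = (a, q)" and a: "a \<in> {-int n..int n}" and q: "q \<in> Cset n k (s - a)" by blast
      have "(\<Sum>i<k. (q(k := a)) i) = (\<Sum>i<k. q i)" by (rule sum.cong) auto
      then show "\<psi> x \<in> Cset n (Suc k) s" using a q by (auto simp: x \<psi>_def Cset_def)
    qed
  next
    show "Cset n (Suc k) s \<subseteq> \<psi> ` ?D"
    proof
      fix p assume p: "p \<in> Cset n (Suc k) s"
      define q where "q = p(k := 0)"
      have "(\<Sum>i<k. q i) = (\<Sum>i<k. p i)" unfolding q_def by (rule sum.cong) auto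
      then have "q \<in> Cset n k (s - p k)" using p by (auto simp: Cset_def q_def)
      moreover have "p k \<in> {-int n..int n}" using p by (auto simp: Cset_def)
      moreover have "p = \<psi> (p k, q)" by (auto simp: \<psi>_def q_def)
      ultimately show "p \<in> \<psi> ` ?D" by blast
    qed
  qed
  have "card (Cset n (Suc k) s) = card ?D" using card_image[OF inj] img by simp
  also have "\<dots> = (\<Sum>a\<in>{-int n..int n}. card (Cset n k (s - a)))"
    by (rule card_SigmaI) (auto simp: finite_Cset)
  finally show ?thesis .
qed

definition Bf :: "nat \<Rightarrow> int \<Rightarrow> int" where
  "Bf k t = (if t < 0 then 0 else if k = 0 then (if t = 0 then 1 else 0) else int ((nat t + k - 1) choose (k - 1)))"

lemma Bf_pascal: "Bf (Suc k) t = Bf (Suc k) (t - 1) + Bf k t"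
proof (cases "t < 0")
  case True then show ?thesis by (simp add: Bf_def)
next
  case False
  show ?thesis
  proof (cases "t = 0")
    case True then show ?thesis by (simp add: Bf_def)
  next
    case False
    define u where "u = nat t - 1"
    have u: "t = int (Suc u)" using False \<open>\<not> t < 0\<close> unfolding u_def by simp
    show ?thesis
    proof (cases k)
      case 0 then show ?thesis using u by (simp add: Bf_def)
    next
      case (Suc k')
      have nt: "nat t = Suc u" "nat (t - 1) = u" using u by simp_all
      have "Suc u + k' = Suc (u + k')" by simp
      then show ?thesis using u Suc nt by (simp add: Bf_def)
    qed
  qed
qed

lemma Bf_tele: "lo - 1 \<le> hi \<Longrightarrow> (\<Sum>a\<in>{lo..hi}. Bf k (t - a)) = Bf (Suc k) (t - lo) - Bf (Suc k) (t - hi - 1)"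
proof (induction hi rule: int_ge_induct)
  case base then show ?case by simp
next
  case (step h)
  have "{lo..h+1} = insert (h+1) {lo..h}" using step by auto
  then have "(\<Sum>a\<in>{lo..h+1}. Bf k (t - a)) = Bf k (t - (h+1)) + (\<Sum>a\<in>{lo..h}. Bf k (t - a))" by simp
  also have "\<dots> = Bf k (t - (h+1)) + Bf (Suc k) (t - lo) - Bf (Suc k) (t - h - 1)" using step by simp
  also have "\<dots> = Bf (Suc k) (t - lo) - Bf (Suc k) (t - (h + 1) - 1)"
  proof -
    have a1: "t - (h + 1) - 1 = t - h - 1 - 1" "t - (h+1) = t - h - 1" by simp_all
    show ?thesis unfolding a1 using Bf_pascal[of k "t - h - 1"] by linarith
  qed
  finally show ?case .
qed

lemma alt_pascal:
  fixes f :: "nat \<Rightarrow> int"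
  shows "(\<Sum>j\<le>k. (-1)^j * int (k choose j) * (f j - f (Suc j))) = (\<Sum>j\<le>Suc k. (-1)^j * int (Suc k choose j) * f j)"
proof -
  have r: "(\<Sum>j\<le>Suc k. (-1)^j * int (Suc k choose j) * f j)
     = f 0 + (\<Sum>j\<le>k. (-1)^(Suc j) * int (k choose j) * f (Suc j)) + (\<Sum>j\<le>k. (-1)^(Suc j) * int (k choose Suc j) * f (Suc j))"
  proof -
    have "(\<Sum>j\<le>Suc k. (-1)^j * int (Suc k choose j) * f j) = f 0 + (\<Sum>j\<le>k. (-1)^(Suc j) * int (Suc k choose Suc j) * f (Suc j))"
      by (subst sum.atMost_Suc_shift) simp
    also have "(\<Sum>j\<le>k. (-1)^(Suc j) * int (Suc k choose Suc j) * f (Suc j)) = (\<Sum>j\<le>k. (-1)^(Suc j) * int (k choose j) * f (Suc j) + (-1)^(Suc j) * int (k choose Suc j) * f (Suc j))"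
      by (rule sum.cong) (simp_all add: algebra_simps)
    also have "\<dots> = (\<Sum>j\<le>k. (-1)^(Suc j) * int (k choose j) * f (Suc j)) + (\<Sum>j\<le>k. (-1)^(Suc j) * int (k choose Suc j) * f (Suc j))"
      by (rule sum.distrib)
    finally show ?thesis by simp
  qed
  have l2: "(\<Sum>j\<le>Suc k. (-1)^j * int (k choose j) * f j) = f 0 + (\<Sum>j\<le>k. (-1)^(Suc j) * int (k choose Suc j) * f (Suc j))"
    by (subst sum.atMost_Suc_shift) simp
  have l3: "(\<Sum>j\<le>Suc k. (-1)^j * int (k choose j) * f j) = (\<Sum>j\<le>k. (-1)^j * int (k choose j) * f j)"
    by simp
  have "(\<Sum>j\<le>k. (-1)^j * int (k choose j) * (f j - f (Suc j)))
     = (\<Sum>j\<le>k. (-1)^j * int (k choose j) * f j + (-1)^(Suc j) * int (k choose j) * f (Suc j))"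
    by (rule sum.cong) (simp_all add: algebra_simps)
  also have "\<dots> = (\<Sum>j\<le>k. (-1)^j * int (k choose j) * f j) + (\<Sum>j\<le>k. (-1)^(Suc j) * int (k choose j) * f (Suc j))"
    by (rule sum.distrib)
  finally show ?thesis using r l2 l3 by linarith
qed

lemma Cset_formula:
  "int (card (Cset n k s)) = (\<Sum>j\<le>k. (-1)^j * int (k choose j) * Bf k (s + int k * int n - int j * (2 * int n + 1)))"
proof (induction k arbitrary: s)
  case 0 then show ?case by (simp add: Cset_0 Bf_def)
next
  case (Suc k)
  let ?m = "2 * int n + 1"
  have "int (card (Cset n (Suc k) s)) = (\<Sum>a\<in>{-int n..int n}. int (card (Cset n k (s - a))))"
    by (simp add: Cset_Suc)
  also have "\<dots> = (\<Sum>a\<in>{-int n..int n}. \<Sum>j\<le>k. (-1)^j * int (k choose j) * Bf k (s - a + int k * int n - int j * ?m))"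
    using Suc.IH by simp
  also have "\<dots> = (\<Sum>j\<le>k. (-1)^j * int (k choose j) * (\<Sum>a\<in>{-int n..int n}. Bf k ((s + int k * int n - int j * ?m) - a)))"
    by (subst sum.swap) (simp add: sum_distrib_left algebra_simps)
  also have "\<dots> = (\<Sum>j\<le>k. (-1)^j * int (k choose j) * (Bf (Suc k) (s + int (Suc k) * int n - int j * ?m) - Bf (Suc k) (s + int (Suc k) * int n - int (Suc j) * ?m)))"
  proof (rule sum.cong[OF refl])
    fix j assume "j \<in> {..k}"
    define u where "u = s + int k * int n - int j * ?m"
    have t: "(\<Sum>a\<in>{-int n..int n}. Bf k (u - a)) = Bf (Suc k) (u - (- int n)) - Bf (Suc k) (u - int n - 1)"
      by (rule Bf_tele) simp
    have e1: "u - (- int n) = s + int (Suc k) * int n - int j * ?m" by (simp add: u_def algebra_simps)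
    have e2: "u - int n - 1 = s + int (Suc k) * int n - int (Suc j) * ?m" by (simp add: u_def algebra_simps)
    show "(-1)^j * int (k choose j) * (\<Sum>a\<in>{-int n..int n}. Bf k ((s + int k * int n - int j * ?m) - a))
      = (-1)^j * int (k choose j) * (Bf (Suc k) (s + int (Suc k) * int n - int j * ?m) - Bf (Suc k) (s + int (Suc k) * int n - int (Suc j) * ?m))"
      using t unfolding u_def[symmetric] e1 e2 by simp
  qed
  also have "\<dots> = (\<Sum>j\<le>Suc k. (-1)^j * int (Suc k choose j) * Bf (Suc k) (s + int (Suc k) * int n - int j * ?m))"
    by (rule alt_pascal)
  finally show ?case .
qed



lemma sum6: "(\<Sum>j\<le>(6::nat). f j) = f 0 + f 1 + f 2 + f 3 + f 4 + f (5::nat) + (f 6 :: int)"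
  by (simp add: eval_nat_numeral add.assoc)

lemma factS: "fact (m + 1) = (m + 1) * (fact m :: nat)"
  by simp
lemma fact5: "fact (u + 5) = (u+1)*(u+2)*(u+3)*(u+4)*(u+5) * (fact u :: nat)"
proof -
  have q: "u + 4 + 1 = u + 5" "u + 3 + 1 = u + 4" "u + 2 + 1 = u + 3" "u + 1 + 1 = u + 2" by simp_all
  have a: "fact (u + 5) = (u+5) * (fact (u+4) :: nat)" using factS[of "u+4"] by (simp only: q)
  have b: "fact (u + 4) = (u+4) * (fact (u+3) :: nat)" using factS[of "u+3"] by (simp only: q)
  have c: "fact (u + 3) = (u+3) * (fact (u+2) :: nat)" using factS[of "u+2"] by (simp only: q)
  have d: "fact (u + 2) = (u+2) * (fact (u+1) :: nat)" using factS[of "u+1"] by (simp only: q)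
  have e: "fact (u + 1) = (u+1) * (fact u :: nat)" using factS[of "u"] .
  show ?thesis unfolding a b c d e by (simp only: ac_simps)
qed
lemma binom5: "120 * ((u + 5) choose 5) = (u+1)*(u+2)*(u+3)*(u+4)*(u+5)"
proof -
  have "fact 5 * fact (u + 5 - 5) * ((u + 5) choose 5) = (fact (u + 5) :: nat)"
    by (rule binomial_fact_lemma) simp
  moreover have "u + 5 - 5 = u" by simp
  moreover have "fact 5 = (120::nat)" by (simp add: fact_numeral)
  ultimately have "120 * fact u * ((u + 5) choose 5) = (u+1)*(u+2)*(u+3)*(u+4)*(u+5) * (fact u :: nat)"
    unfolding fact5 by simp
  then have "fact u * (120 * ((u + 5) choose 5)) = fact u * ((u+1)*(u+2)*(u+3)*(u+4)*(u+5))"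
    by (simp only: ac_simps)
  moreover have "fact u \<noteq> (0::nat)" by simp
  ultimately show ?thesis by simp
qed

lemma Bf6: assumes "t \<ge> -5" shows "120 * Bf 6 t = (t+1)*(t+2)*(t+3)*(t+4)*(t+5)"
proof (cases "t < 0")
  case True
  then have "t = -1 \<or> t = -2 \<or> t = -3 \<or> t = -4 \<or> t = -5" using assms by linarith
  then show ?thesis using True by (auto simp: Bf_def)
next
  case False
  define u where "u = nat t"
  have t: "t = int u" using False u_def by simp
  have "120 * Bf 6 t = int (120 * ((u + 5) choose 5))" using t by (simp add: Bf_def add.commute)
  also have "\<dots> = int ((u+1)*(u+2)*(u+3)*(u+4)*(u+5))" by (simp only: binom5)
  also have "\<dots> = (int u+1)*(int u+2)*(int u+3)*(int u+4)*(int u+5)" by (simp only: of_nat_mult of_nat_add of_nat_1 of_nat_numeral)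
  finally show ?thesis unfolding t .
qed

lemma Bf6_neg: "t < 0 \<Longrightarrow> Bf 6 t = 0" by (simp add: Bf_def)

lemma A5b_Cset: "A5b n = card (Cset n 6 0)" by (simp add: A5b_def Cset_def)



lemma combine: "120 * b = p \<Longrightarrow> f = c * b \<Longrightarrow> p = q \<Longrightarrow> 120 * f = c * (q::int)"
  by (metis mult.left_commute)

lemma A5b_int:
  fixes n :: nat and N :: int defines "N \<equiv> int n"
  shows "120 * int (A5b n) = (6*N+1)*(6*N+2)*(6*N+3)*(6*N+4)*(6*N+5) - 6*((4*N)*(4*N+1)*(4*N+2)*(4*N+3)*(4*N+4))
     + 15*((2*N-1)*(2*N)*(2*N+1)*(2*N+2)*(2*N+3))"
proof -
  define f where "f = (\<lambda>j::nat. (-1)^j * int (6 choose j) * Bf 6 (0 + int 6 * int n - int j * (2 * int n + 1)))"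
  have "int (A5b n) = (\<Sum>j\<le>6. f j)" unfolding A5b_Cset Cset_formula f_def ..
  also have "\<dots> = f 0 + f 1 + f 2 + f 3 + f 4 + f 5 + f 6" by (rule sum6)
  finally have A: "int (A5b n) = f 0 + f 1 + f 2 + f 3 + f 4 + f 5 + f 6" .
  have c1: "(6::nat) choose 1 = 6" by simp
  have c2: "(6::nat) choose 2 = 15" by (simp add: eval_nat_numeral)
  have "120 * f 0 = (6*N+1)*(6*N+2)*(6*N+3)*(6*N+4)*(6*N+5)"
    using Bf6[of "6*N"] by (simp add: f_def N_def)
  moreover have "120 * f 1 = - 6*((4*N)*(4*N+1)*(4*N+2)*(4*N+3)*(4*N+4))"
  proof -
    have "120 * Bf 6 (6*N - (2*N+1)) = (6*N - (2*N+1)+1)*(6*N - (2*N+1)+2)*(6*N - (2*N+1)+3)*(6*N - (2*N+1)+4)*(6*N - (2*N+1)+5)"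
      by (rule Bf6) (simp add: N_def)
    moreover have "f 1 = - 6 * Bf 6 (6*N - (2*N+1))" by (simp add: f_def N_def c1)
    moreover have "(6*N - (2*N+1)+1)*(6*N - (2*N+1)+2)*(6*N - (2*N+1)+3)*(6*N - (2*N+1)+4)*(6*N - (2*N+1)+5) = (4*N)*(4*N+1)*(4*N+2)*(4*N+3)*(4*N+4)"
      by (simp add: algebra_simps)
    ultimately show ?thesis by simp
  qed
  moreover have "120 * f 2 = 15*((2*N-1)*(2*N)*(2*N+1)*(2*N+2)*(2*N+3))"
  proof -
    have "120 * Bf 6 (6*N - 2*(2*N+1)) = (6*N - 2*(2*N+1)+1)*(6*N - 2*(2*N+1)+2)*(6*N - 2*(2*N+1)+3)*(6*N - 2*(2*N+1)+4)*(6*N - 2*(2*N+1)+5)"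
      by (rule Bf6) (simp add: N_def)
    moreover have "f 2 = 15 * Bf 6 (6*N - 2*(2*N+1))" by (simp add: f_def N_def c2)
    moreover have "(6*N - 2*(2*N+1)+1)*(6*N - 2*(2*N+1)+2)*(6*N - 2*(2*N+1)+3)*(6*N - 2*(2*N+1)+4)*(6*N - 2*(2*N+1)+5) = (2*N-1)*(2*N)*(2*N+1)*(2*N+2)*(2*N+3)"
      by (simp add: algebra_simps)
    ultimately show ?thesis by (rule combine)
  qed
  moreover have "f 3 = 0" "f 4 = 0" "f 5 = 0" "f 6 = 0"
    by (simp_all add: f_def Bf6_neg)
  ultimately show ?thesis using A by linarith
qed



lemma sum7: "(\<Sum>j\<le>(7::nat). f j) = f 0 + f 1 + f 2 + f 3 + f 4 + f (5::nat) + f 6 + (f 7 :: real)"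
  by (simp add: eval_nat_numeral add.assoc)

lemma negX: "- fps_X = fps_const (-1) * (fps_X :: real fps)"
  by (simp add: fps_eq_iff)

lemma t1: "of_nat c * (- fps_X)^k * 1^(7-k) = fps_const ((-1)^k * real c) * (fps_X :: real fps)^k"
proof -
  have "of_nat c * (- fps_X)^k * 1^(7-k) = fps_const (real c) * (fps_const ((-1)^k) * (fps_X :: real fps)^k)"
    unfolding negX power_mult_distrib fps_const_power fps_of_nat power_one mult_1_right ..
  also have "\<dots> = fps_const ((-1)^k * real c) * (fps_X :: real fps)^k"
    by (simp only: mult.assoc[symmetric] fps_const_mult mult.commute[of "real c"])
  finally show ?thesis .
qed

lemma coeff7: "fps_nth ((1 - fps_X)^7 * Abs_fps a) n = (\<Sum>k\<le>7. (-1)^k * real (7 choose k) * (if n < k then 0 else a (n - k)))"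
proof -
  have "(1 - fps_X :: real fps)^7 = (- fps_X + 1)^7" by simp
  also have "\<dots> = (\<Sum>k\<le>7. of_nat (7 choose k) * (- fps_X)^k * 1^(7-k))" by (rule binomial_ring)
  also have "\<dots> = (\<Sum>k\<le>7. fps_const ((-1)^k * real (7 choose k)) * fps_X^k)"
    by (simp only: t1)
  finally have q: "(1 - fps_X :: real fps)^7 = (\<Sum>k\<le>7. fps_const ((-1)^k * real (7 choose k)) * fps_X^k)" .
  have "fps_nth ((1 - fps_X)^7 * Abs_fps a) n = (\<Sum>k\<le>7. fps_nth (fps_const ((-1)^k * real (7 choose k)) * (fps_X^k * Abs_fps a)) n)"
    unfolding q sum_distrib_right fps_sum_nth mult.assoc ..
  also have "\<dots> = (\<Sum>k\<le>7. (-1)^k * real (7 choose k) * (if n < k then 0 else a (n - k)))"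
    by (simp only: fps_mult_left_const_nth fps_X_power_mult_nth fps_nth_Abs_fps if_distrib mult_zero_right)
  finally show ?thesis .
qed



definition pE :: "real \<Rightarrow> real" where
  "pE x = (1/5) * (1 + 2 * x)^2 * (5 + 27 * x + 71 * x^2 + 88 * x^3 + 44 * x^4)"

lemma A5b_eq: "A5b n = card (A5set n)" by (simp add: A5b_def A5set_def)

lemma E6b_A5: "E6b n = (2 * n + 1) * A5b n" by (simp add: E6b_eq A5b_eq)

lemma A5b_real: "120 * real (A5b n) = (6*real n+1)*(6*real n+2)*(6*real n+3)*(6*real n+4)*(6*real n+5) - 6*((4*real n)*(4*real n+1)*(4*real n+2)*(4*real n+3)*(4*real n+4))
     + 15*((2*real n-1)*(2*real n)*(2*real n+1)*(2*real n+2)*(2*real n+3))"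
proof -
  have "real_of_int (120 * int (A5b n)) = real_of_int ((6*int n+1)*(6*int n+2)*(6*int n+3)*(6*int n+4)*(6*int n+5) - 6*((4*int n)*(4*int n+1)*(4*int n+2)*(4*int n+3)*(4*int n+4))
     + 15*((2*int n-1)*(2*int n)*(2*int n+1)*(2*int n+2)*(2*int n+3)))"
    using A5b_int[of n] by (rule arg_cong)
  then show ?thesis by simp
qed

lemma E6b_real: "real (E6b n) = pE (real n)"
proof -
  have "real (E6b n) = (2 * real n + 1) * real (A5b n)" by (simp add: E6b_A5 algebra_simps)
  moreover have "120 * real (A5b n) = 24 * ((1 + 2 * real n) * (5 + 27 * real n + 71 * (real n)^2 + 88 * (real n)^3 + 44 * (real n)^4))"
    by (simp only: A5b_real) (simp add: algebra_simps power2_eq_square power3_eq_cube power4_eq_xxxx)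
  then have "real (A5b n) = (1/5) * ((1 + 2 * real n) * (5 + 27 * real n + 71 * (real n)^2 + 88 * (real n)^3 + 44 * (real n)^4))"
    by linarith
  ultimately show ?thesis unfolding pE_def by (simp add: power2_eq_square)
qed

lemma E6s_formula: "n \<ge> 1 \<Longrightarrow> real_of_int (E6s n) = (2/5) * real n * (47 + 480 * (real n)^2 + 528 * (real n)^4)"
proof -
  assume "n \<ge> 1"
  then obtain m where n: "n = Suc m" by (cases n) auto
  have "real_of_int (E6s n) = real (E6b n) - real (E6b m)" by (simp add: E6s_def n)
  also have "\<dots> = pE (1 + real m) - pE (real m)" by (simp add: E6b_real n)
  also have "\<dots> = (2/5) * (1 + real m) * (47 + 480 * (1 + real m)^2 + 528 * (1 + real m)^4)"
    unfolding pE_def by (simp add: field_simps power2_eq_square power3_eq_cube power4_eq_xxxx)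
  finally show ?thesis by (simp add: n)
qed

lemma diff7: "pE (x + 7) - 7 * pE (x + 6) + 21 * pE (x + 5) - 35 * pE (x + 4) + 35 * pE (x + 3) - 21 * pE (x + 2) + 7 * pE (x + 1) - pE x = 0"
  unfolding pE_def by (simp add: algebra_simps power2_eq_square power3_eq_cube power4_eq_xxxx)



lemma Pnth: "fps_nth (1 + 416 * fps_X + 5815 * fps_X^2 + 12880 * fps_X^3 + 5815 * fps_X^4 + 416 * fps_X^5 + fps_X^6 :: real fps) n
  = (if n = 0 then 1 else 0) + 416 * (if n = 1 then 1 else 0) + 5815 * (if n = 2 then 1 else 0) + 12880 * (if n = 3 then 1 else 0)
    + 5815 * (if n = 4 then 1 else 0) + 416 * (if n = 5 then 1 else 0) + (if n = 6 then 1 else 0)"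
  by (simp add: numeral_fps_const fps_X_power_nth)

lemma binoms7: "(7::nat) choose 0 = 1" "(7::nat) choose 1 = 7" "(7::nat) choose 2 = 21" "(7::nat) choose 3 = 35"
  "(7::nat) choose 4 = 35" "(7::nat) choose 5 = 21" "(7::nat) choose 6 = 7" "(7::nat) choose 7 = 1"
  by (simp_all add: eval_nat_numeral)

lemma key: "(1 - fps_X)^7 * Abs_fps (\<lambda>n. real (E6b n)) = (1 + 416 * fps_X + 5815 * fps_X^2 + 12880 * fps_X^3 + 5815 * fps_X^4 + 416 * fps_X^5 + fps_X^6 :: real fps)"
proof (rule fps_ext)
  fix n
  define a where "a = (\<lambda>n. real (E6b n))"
  have av: "\<And>k. a k = pE (real k)" by (simp add: a_def E6b_real)
  have "fps_nth ((1 - fps_X)^7 * Abs_fps a) n = (\<Sum>k\<le>7. (-1)^k * real (7 choose k) * (if n < k then 0 else a (n - k)))"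
    by (rule coeff7)
  also have "\<dots> = (if n < 0 then 0 else a n) - 7 * (if n < 1 then 0 else a (n - 1)) + 21 * (if n < 2 then 0 else a (n - 2))
     - 35 * (if n < 3 then 0 else a (n - 3)) + 35 * (if n < 4 then 0 else a (n - 4)) - 21 * (if n < 5 then 0 else a (n - 5))
     + 7 * (if n < 6 then 0 else a (n - 6)) - (if n < 7 then 0 else a (n - 7))"
    by (simp only: sum7 binoms7) simp
  finally have L: "fps_nth ((1 - fps_X)^7 * Abs_fps a) n = (if n < 0 then 0 else a n) - 7 * (if n < 1 then 0 else a (n - 1)) + 21 * (if n < 2 then 0 else a (n - 2))
     - 35 * (if n < 3 then 0 else a (n - 3)) + 35 * (if n < 4 then 0 else a (n - 4)) - 21 * (if n < 5 then 0 else a (n - 5))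
     + 7 * (if n < 6 then 0 else a (n - 6)) - (if n < 7 then 0 else a (n - 7))" .
  show "fps_nth ((1 - fps_X)^7 * Abs_fps (\<lambda>n. real (E6b n))) n = fps_nth (1 + 416 * fps_X + 5815 * fps_X^2 + 12880 * fps_X^3 + 5815 * fps_X^4 + 416 * fps_X^5 + fps_X^6 :: real fps) n"
  proof (cases "n \<ge> 7")
    case True
    then obtain m where m: "n = m + 7" by (metis add.commute le_Suc_ex)
    have "fps_nth ((1 - fps_X)^7 * Abs_fps a) n = pE (real m + 7) - 7 * pE (real m + 6) + 21 * pE (real m + 5) - 35 * pE (real m + 4) + 35 * pE (real m + 3) - 21 * pE (real m + 2) + 7 * pE (real m + 1) - pE (real m)"
      using L unfolding m by (simp add: av add.commute)
    also have "\<dots> = 0" by (rule diff7)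
    finally show ?thesis unfolding Pnth a_def using True by simp
  next
    case False
    then have "n = 0 \<or> n = 1 \<or> n = 2 \<or> n = 3 \<or> n = 4 \<or> n = 5 \<or> n = 6" by linarith
    then show ?thesis unfolding Pnth a_def[symmetric] L by (auto simp: av pE_def)
  qed
qed


theorem mainTheorem12:
  shows "(\<forall>n::nat. E6b n = (2 * n + 1) * A5b n
            \<and> real (E6b n) = (1/5) * (1 + 2 * real n)^2
                 * (5 + 27 * real n + 71 * (real n)^2 + 88 * (real n)^3 + 44 * (real n)^4))
       \<and> E6s 0 = 1
       \<and> (\<forall>n::nat. n \<ge> 1 \<longrightarrow> real_of_int (E6s n) = (2/5) * real n * (47 + 480 * (real n)^2 + 528 * (real n)^4))
       \<and> (Abs_fps (\<lambda>n. real (E6b n)) :: real fps) =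
           (1 + 416 * fps_X + 5815 * fps_X^2 + 12880 * fps_X^3 + 5815 * fps_X^4 + 416 * fps_X^5 + fps_X^6)
             / (1 - fps_X)^7"
proof (intro conjI allI impI)
  fix n :: nat
  show "E6b n = (2 * n + 1) * A5b n" by (rule E6b_A5)
  show "real (E6b n) = (1/5) * (1 + 2 * real n)^2
                 * (5 + 27 * real n + 71 * (real n)^2 + 88 * (real n)^3 + 44 * (real n)^4)"
    using E6b_real[of n] by (simp add: pE_def)
next
  show "E6s 0 = 1" by (simp add: E6s_def)
next
  fix n :: nat assume "n \<ge> 1"
  then show "real_of_int (E6s n) = (2/5) * real n * (47 + 480 * (real n)^2 + 528 * (real n)^4)"
    by (rule E6s_formula)
next
  have nz: "(1 - fps_X :: real fps)^7 \<noteq> 0"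
  proof
    assume "(1 - fps_X :: real fps)^7 = 0"
    then have "fps_nth ((1 - fps_X :: real fps)^7) 0 = 0" by simp
    then show False by simp
  qed
  have "(1 + 416 * fps_X + 5815 * fps_X^2 + 12880 * fps_X^3 + 5815 * fps_X^4 + 416 * fps_X^5 + fps_X^6)
             / (1 - fps_X)^7 = (Abs_fps (\<lambda>n. real (E6b n)) * (1 - fps_X)^7) / (1 - fps_X :: real fps)^7"
    unfolding key[symmetric] by (simp only: mult.commute)
  also have "\<dots> = Abs_fps (\<lambda>n. real (E6b n))" by (rule fps_divide_times_eq[OF nz])
  finally show "(Abs_fps (\<lambda>n. real (E6b n)) :: real fps) =
           (1 + 416 * fps_X + 5815 * fps_X^2 + 12880 * fps_X^3 + 5815 * fps_X^4 + 416 * fps_X^5 + fps_X^6)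
             / (1 - fps_X)^7" by simp
qed

end
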